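(* The formal Burau group $\mathcal{B}$ equals Salter's group $\Gamma$; that is, every $A\in\mathcal{B}$ satisfies that $A|_{t=1}$ is a $3\times3$ permutation matrix.
   Context: For a matrix $A$ with Laurent polynomial entries, $\overline{A}$ denotes substitution $t\mapsto t^{-1}$ in every entry. Let $J_3=\begin{pmatrix}1&-t^{-1}&-t^{-1}\\-t&1&-t^{-1}\\-t&-t&1\end{pmatrix}$, $v=(t,t^2,t^3)$ (a row vector), $\vec{1}=(1,1,1)^T$. The formal Burau group is $\mathcal{B}=\{A\in\mathrm{GL}(3,\mathbb{Z}[t,t^{-1}]) : vA=v,\ A\vec 1=\vec 1,\ \overline{A}J_3A^T=J_3\}$, and Salter's group is $\Gamma=\{A\in\mathcal{B}: A|_{t=1}\text{ is a }3\times 3\text{ permutation matrix}\}$. *)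

theory Defs
  imports "HOL-Analysis.Analysis" "HOL-Computational_Algebra.Formal_Laurent_Series"
begin

text \<open>Laurent polynomials Z[t,t^-1] are represented as integer formal Laurent series
  (type int fls) with finitely many nonzero coefficients; t is fls_X.\<close>

definition lsupp :: "int fls \<Rightarrow> int set" where
  "lsupp f = {n. fls_nth f n \<noteq> 0}"

definition is_lpoly :: "int fls \<Rightarrow> bool" where
  "is_lpoly f \<longleftrightarrow> finite (lsupp f)"

definition lbar :: "int fls \<Rightarrow> int fls" where
  "lbar f = (\<Sum>n\<in>lsupp f. fls_const (fls_nth f n) * fls_X_intpow (-n))"

definition leval1 :: "int fls \<Rightarrow> int" where
  "leval1 f = (\<Sum>n\<in>lsupp f. fls_nth f n)"

type_synonym lmat = "int fls ^ 3 ^ 3"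

definition lpoly_mat :: "lmat \<Rightarrow> bool" where
  "lpoly_mat A \<longleftrightarrow> (\<forall>i j. is_lpoly (A $ i $ j))"

definition GL3_lpoly :: "lmat set" where
  "GL3_lpoly = {A. lpoly_mat A \<and> (\<exists>B. lpoly_mat B \<and> A ** B = mat 1 \<and> B ** A = mat 1)}"

definition mbar :: "lmat \<Rightarrow> lmat" where
  "mbar A = (\<chi> i j. lbar (A $ i $ j))"

definition meval1 :: "lmat \<Rightarrow> int ^ 3 ^ 3" where
  "meval1 A = (\<chi> i j. leval1 (A $ i $ j))"

text \<open>Indices of the numeral type 3 are written 1, 2, 3.\<close>
definition J3 :: lmat where
  "J3 = (\<chi> i j. if i = j then 1
               else if (i, j) \<in> {(1,2),(1,3),(2,3)} then - fls_X_inv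
               else - fls_X)"

definition vt :: "int fls ^ 3" where
  "vt = (\<chi> i. if i = 1 then fls_X else if i = 2 then fls_X ^ 2 else fls_X ^ 3)"

definition ones3 :: "int fls ^ 3" where
  "ones3 = (\<chi> i. 1)"

definition formal_Burau :: "lmat set" where
  "formal_Burau = {A \<in> GL3_lpoly. vt v* A = vt \<and> A *v ones3 = ones3
                     \<and> mbar A ** J3 ** transpose A = J3}"

definition is_perm_matrix :: "int ^ 3 ^ 3 \<Rightarrow> bool" where
  "is_perm_matrix P \<longleftrightarrow> (\<exists>\<sigma>. \<sigma> permutes (UNIV :: 3 set) \<and>
                          P = (\<chi> i j. if \<sigma> i = j then 1 else 0))"

definition Salter_Gamma :: "lmat set" where
  "Salter_Gamma = {A \<in> formal_Burau. is_perm_matrix (meval1 A)}"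

end

theory Submission
  imports Defs
begin
no_notation fps_nth (infixl \<open>$\<close> 75)

definition lmono :: "int \<Rightarrow> int \<Rightarrow> int fls" where
  "lmono c k = fls_const c * fls_X_intpow k"

lemma mono_nth: "fls_nth (lmono c k) n = (if n = k then c else 0)"
  by (simp add: lmono_def)

lemma lsupp_zero: "fls_nth f n = 0 \<longleftrightarrow> n \<notin> lsupp f"
  by (simp add: lsupp_def)

lemma lpoly_decomp: "is_lpoly f \<Longrightarrow> f = (\<Sum>n\<in>lsupp f. lmono (fls_nth f n) n)"
  by (rule fls_eqI) (auto simp: fls_nth_sum mono_nth lsupp_def is_lpoly_def)

lemma leval1_superset: "finite S \<Longrightarrow> lsupp f \<subseteq> S \<Longrightarrow> leval1 f = (\<Sum>n\<in>S. fls_nth f n)"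
  unfolding leval1_def by (rule sum.mono_neutral_left) (auto simp: lsupp_def)

lemma lpoly_add: "is_lpoly f \<Longrightarrow> is_lpoly g \<Longrightarrow> is_lpoly (f + g)"
  unfolding is_lpoly_def
  by (rule finite_subset[of _ "lsupp f \<union> lsupp g"]) (auto simp: lsupp_def)

lemma leval1_add: "is_lpoly f \<Longrightarrow> is_lpoly g \<Longrightarrow> leval1 (f + g) = leval1 f + leval1 g"
proof -
  assume a: "is_lpoly f" "is_lpoly g"
  let ?S = "lsupp f \<union> lsupp g"
  have fin: "finite ?S" using a by (simp add: is_lpoly_def)
  have "leval1 (f+g) = (\<Sum>n\<in>?S. fls_nth (f+g) n)"
    by (rule leval1_superset[OF fin]) (auto simp: lsupp_def)
  also have "\<dots> = (\<Sum>n\<in>?S. fls_nth f n) + (\<Sum>n\<in>?S. fls_nth g n)" by (simp add: sum.distrib)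
  also have "\<dots> = leval1 f + leval1 g"
    using leval1_superset[OF fin, of f] leval1_superset[OF fin, of g] by auto
  finally show ?thesis .
qed

lemma lpoly_zero: "is_lpoly 0" by (simp add: is_lpoly_def lsupp_def)
lemma leval1_zero: "leval1 0 = 0" by (simp add: leval1_def lsupp_def)

lemma lpoly_sum: "finite S \<Longrightarrow> (\<And>x. x \<in> S \<Longrightarrow> is_lpoly (F x)) \<Longrightarrow> is_lpoly (\<Sum>x\<in>S. F x)"
  by (induction S rule: finite_induct) (auto simp: lpoly_zero lpoly_add)

lemma leval1_sum: "finite S \<Longrightarrow> (\<And>x. x \<in> S \<Longrightarrow> is_lpoly (F x)) \<Longrightarrow> leval1 (\<Sum>x\<in>S. F x) = (\<Sum>x\<in>S. leval1 (F x))"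
  by (induction S rule: finite_induct) (auto simp: leval1_zero leval1_add lpoly_sum)

lemma lsupp_mono: "lsupp (lmono c k) \<subseteq> {k}" by (auto simp: lsupp_def mono_nth)

lemma lpoly_mono: "is_lpoly (lmono c k)"
  unfolding is_lpoly_def using lsupp_mono finite_subset by blast

lemma leval1_mono: "leval1 (lmono c k) = c"
  by (subst leval1_superset[of "{k}"]) (auto simp: lsupp_mono mono_nth)

lemma mono_mult: "lmono a i * lmono b j = lmono (a*b) (i+j)"
proof -
  have "lmono a i * lmono b j = (fls_const a * fls_const b) * (fls_X_intpow i * fls_X_intpow j)"
    unfolding lmono_def by (simp only: mult_ac)
  also have "\<dots> = lmono (a*b) (i+j)" unfolding lmono_def
    by (simp only: fls_const_mult_const fls_X_intpow_times_fls_X_intpow)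
  finally show ?thesis .
qed

lemma lpoly_mult_aux:
  assumes "is_lpoly f" "is_lpoly g"
  shows "is_lpoly (f*g) \<and> leval1 (f*g) = leval1 f * leval1 g"
proof -
  have ff: "finite (lsupp f)" "finite (lsupp g)" using assms by (auto simp: is_lpoly_def)
  have "f*g = (\<Sum>n\<in>lsupp f. lmono (fls_nth f n) n) * (\<Sum>m\<in>lsupp g. lmono (fls_nth g m) m)"
    using lpoly_decomp[OF assms(1)] lpoly_decomp[OF assms(2)] by metis
  also have "\<dots> = (\<Sum>n\<in>lsupp f. \<Sum>m\<in>lsupp g. lmono (fls_nth f n * fls_nth g m) (n+m))"
    by (simp add: sum_product mono_mult)
  finally have e: "f*g = \<dots>" .
  have "is_lpoly (f*g)" unfolding e by (intro lpoly_sum lpoly_mono ff)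
  moreover have "leval1 (f*g) = leval1 f * leval1 g" unfolding e
    by (simp add: ff lpoly_sum leval1_sum lpoly_mono leval1_mono) (simp add: leval1_def sum_product)
  ultimately show ?thesis by blast
qed

lemma lpoly_mult: "is_lpoly f \<Longrightarrow> is_lpoly g \<Longrightarrow> is_lpoly (f*g)"
  using lpoly_mult_aux by blast
lemma leval1_mult: "is_lpoly f \<Longrightarrow> is_lpoly g \<Longrightarrow> leval1 (f*g) = leval1 f * leval1 g"
  using lpoly_mult_aux by blast

lemma lsupp_uminus: "lsupp (-f) = lsupp f" by (simp add: lsupp_def)
lemma lpoly_uminus: "is_lpoly f \<Longrightarrow> is_lpoly (-f)" by (simp add: is_lpoly_def lsupp_uminus)
lemma leval1_uminus: "leval1 (-f) = - leval1 f" by (simp add: leval1_def lsupp_uminus sum_negf)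

lemma lbar_eq: "lbar f = (\<Sum>n\<in>lsupp f. lmono (fls_nth f n) (-n))"
  by (simp add: lbar_def lmono_def)

lemma lpoly_lbar: "is_lpoly f \<Longrightarrow> is_lpoly (lbar f)"
  unfolding lbar_eq by (rule lpoly_sum) (auto simp: is_lpoly_def[of f] lpoly_mono)

lemma leval1_lbar: "is_lpoly f \<Longrightarrow> leval1 (lbar f) = leval1 f"
  unfolding lbar_eq
  by (subst leval1_sum) (auto simp: is_lpoly_def[of f] lpoly_mono leval1_mono leval1_def[of f])

lemma lsupp_X: "lsupp fls_X = {1}" by (auto simp: lsupp_def)
lemma lsupp_Xinv: "lsupp fls_X_inv = {-1}" by (auto simp: lsupp_def)
lemma lsupp_Xpow: "lsupp (fls_X ^ k) = {int k}" by (auto simp: lsupp_def)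
lemma lsupp_one: "lsupp 1 = {0}" by (auto simp: lsupp_def)

lemma lpoly_basic: "is_lpoly fls_X" "is_lpoly fls_X_inv" "is_lpoly (fls_X ^ k)" "is_lpoly 1"
  by (simp_all add: is_lpoly_def lsupp_X lsupp_Xinv lsupp_Xpow lsupp_one)
lemma leval1_basic: "leval1 fls_X = 1" "leval1 fls_X_inv = 1" "leval1 (fls_X ^ k) = 1" "leval1 1 = 1"
  by (simp_all add: leval1_def lsupp_X lsupp_Xinv lsupp_Xpow lsupp_one)


lemma lpoly_mat_mult:
  assumes "lpoly_mat A" "lpoly_mat B"
  shows "lpoly_mat (A ** B) \<and> meval1 (A ** B) = meval1 A ** meval1 B"
  using assms unfolding lpoly_mat_def meval1_def matrix_matrix_mult_def
  by (simp add: vec_eq_iff lpoly_sum lpoly_mult leval1_sum leval1_mult)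

lemma lpoly_mat_mbar: "lpoly_mat A \<Longrightarrow> lpoly_mat (mbar A) \<and> meval1 (mbar A) = meval1 A"
  unfolding lpoly_mat_def meval1_def mbar_def
  by (simp add: vec_eq_iff lpoly_lbar leval1_lbar)

lemma lpoly_mat_transpose: "lpoly_mat A \<Longrightarrow> lpoly_mat (transpose A) \<and> meval1 (transpose A) = transpose (meval1 A)"
  unfolding lpoly_mat_def meval1_def transpose_def
  by (simp add: vec_eq_iff)

definition Jz :: "int^3^3" where "Jz = (\<chi> i j. if i = j then 1 else -1)"

lemma lpoly_mat_J3: "lpoly_mat J3 \<and> meval1 J3 = Jz"
  unfolding lpoly_mat_def meval1_def J3_def Jz_def
  by (simp add: vec_eq_iff lpoly_basic lpoly_uminus leval1_basic leval1_uminus)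

lemma vt_basic: "is_lpoly (vt $ i) \<and> leval1 (vt $ i) = 1"
  unfolding vt_def by (simp add: lpoly_basic leval1_basic del: power_numeral)

lemma row3:
  fixes a b c :: int
  assumes "a + b + c = 1" "a*a + b*b + c*c = 1"
  shows "(a = 1 \<and> b = 0 \<and> c = 0) \<or> (a = 0 \<and> b = 1 \<and> c = 0) \<or> (a = 0 \<and> b = 0 \<and> c = 1)"
proof -
  have s: "x*x \<ge> 0" for x :: int by simp
  have b1: "x*x \<le> 1 \<Longrightarrow> x = -1 \<or> x = 0 \<or> x = 1" for x :: int
  proof -
    assume "x*x \<le> 1"
    moreover have "x \<ge> 2 \<Longrightarrow> x*x \<ge> 4" using mult_mono[of 2 x 2 x] by simp
    moreover have "x \<le> -2 \<Longrightarrow> x*x \<ge> 4" using mult_mono[of 2 "-x" 2 "-x"] by simp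
    ultimately show ?thesis by linarith
  qed
  have "a = -1 \<or> a = 0 \<or> a = 1" using b1[of a] s[of b] s[of c] assms(2) by linarith
  moreover have "b = -1 \<or> b = 0 \<or> b = 1" using b1[of b] s[of a] s[of c] assms(2) by linarith
  moreover have "c = -1 \<or> c = 0 \<or> c = 1" using b1[of c] s[of b] s[of a] assms(2) by linarith
  ultimately show ?thesis using assms by auto
qed

lemma int_part:
  fixes P :: "int^3^3"
  assumes col: "\<And>j. (\<Sum>i\<in>UNIV. P$i$j) = 1"
    and row: "\<And>i. (\<Sum>j\<in>UNIV. P$i$j) = 1"
    and J: "P ** Jz ** transpose P = Jz"
  shows "is_perm_matrix P"
proof -
  have r: "(P$i$1 = 1 \<and> P$i$2 = 0 \<and> P$i$3 = 0) \<or> (P$i$1 = 0 \<and> P$i$2 = 1 \<and> P$i$3 = 0)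
      \<or> (P$i$1 = 0 \<and> P$i$2 = 0 \<and> P$i$3 = 1)" for i
  proof (rule row3)
    show rs: "P$i$1 + P$i$2 + P$i$3 = 1" using row[of i] by (simp add: sum_3)
    have "(P ** Jz ** transpose P) $ i $ i = 1" using J by (simp add: Jz_def)
    hence "2 * (P$i$1 * P$i$1 + P$i$2 * P$i$2 + P$i$3 * P$i$3) - (P$i$1 + P$i$2 + P$i$3)^2 = 1"
      by (simp add: matrix_matrix_mult_def transpose_def Jz_def sum_3 algebra_simps power2_eq_square)
    thus "P$i$1 * P$i$1 + P$i$2 * P$i$2 + P$i$3 * P$i$3 = 1" using rs by simp
  qed
  define \<sigma> where "\<sigma> i = (if P$i$1 = 1 then 1 else if P$i$2 = 1 then 2 else (3::3))" for i
  have Pe: "P$i$j = (if \<sigma> i = j then 1 else 0)" for i j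
    using r[of i] exhaust_3[of j] by (auto simp: \<sigma>_def)
  have "card {i. \<sigma> i = j} = 1" for j
  proof -
    have "int (card {i. \<sigma> i = j}) = (\<Sum>i\<in>{i\<in>UNIV. \<sigma> i = j}. 1)" by simp
    also have "\<dots> = (\<Sum>i\<in>UNIV. if \<sigma> i = j then 1 else 0)" by (rule sum.inter_filter) simp
    also have "\<dots> = 1" using col[of j] by (simp add: Pe)
    finally show ?thesis by simp
  qed
  hence "\<forall>y. \<exists>!x. \<sigma> x = y"
    by (metis (mono_tags, lifting) card_1_singletonE mem_Collect_eq singletonD singletonI)
  hence "\<sigma> permutes UNIV" by (simp add: permutes_univ)
  moreover have "P = (\<chi> i j. if \<sigma> i = j then 1 else 0)" by (simp add: vec_eq_iff Pe)
  ultimately show ?thesis unfolding is_perm_matrix_def by blast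
qed


theorem lemma3p15:
  shows "formal_Burau = Salter_Gamma"
proof
  show "Salter_Gamma \<subseteq> formal_Burau" by (auto simp: Salter_Gamma_def)
  show "formal_Burau \<subseteq> Salter_Gamma"
  proof
    fix A assume A: "A \<in> formal_Burau"
    hence L: "lpoly_mat A" and v: "vt v* A = vt" and o: "A *v ones3 = ones3"
      and J: "mbar A ** J3 ** transpose A = J3"
      by (auto simp: formal_Burau_def GL3_lpoly_def)
    have Le: "is_lpoly (A $ i $ j)" for i j using L by (simp add: lpoly_mat_def)
    have col: "(\<Sum>i\<in>UNIV. meval1 A $ i $ j) = 1" for j
    proof -
      have "leval1 ((vt v* A) $ j) = leval1 (vt $ j)" using v by simp
      thus ?thesis
        by (simp add: vector_matrix_mult_def leval1_sum lpoly_mult leval1_mult vt_basic Le meval1_def)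
    qed
    have row: "(\<Sum>j\<in>UNIV. meval1 A $ i $ j) = 1" for i
    proof -
      have "leval1 ((A *v ones3) $ i) = leval1 (ones3 $ i)" using o by simp
      thus ?thesis
        by (simp add: matrix_vector_mult_def ones3_def leval1_sum lpoly_mult leval1_mult
            lpoly_basic leval1_basic Le meval1_def)
    qed
    have "meval1 (mbar A ** J3 ** transpose A) = meval1 A ** Jz ** transpose (meval1 A)"
      using lpoly_mat_mult lpoly_mat_mbar[OF L] lpoly_mat_transpose[OF L] lpoly_mat_J3 by metis
    hence "meval1 A ** Jz ** transpose (meval1 A) = Jz" using J lpoly_mat_J3 by simp
    hence "is_perm_matrix (meval1 A)" using int_part col row by blast
    thus "A \<in> Salter_Gamma" using A by (simp add: Salter_Gamma_def)
  qed
qed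

end
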